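(* Let $\mathfrak{C}$ be a clustering functor on $\mathcal{M}^{inj}$ that is scale invariant: for every finite metric space $(X,d_X)$ and every $\lambda>0$, $\mathfrak{C}(X,\lambda\cdot d_X)=\mathfrak{C}(X,d_X)$. Let $K(\mathfrak{C})=\{k\geq2:\mathfrak{C}(\Delta_k(1))\text{ consists of one block}\}$. If $K(\mathfrak{C})=\emptyset$, then $\mathfrak{C}$ assigns to each finite metric space its partition into singletons. Otherwise, letting $k_{\mathfrak{C}}=\min K(\mathfrak{C})$: for each $k\geq k_{\mathfrak{C}}$, $\mathfrak{C}$ assigns to each $X\in\mathcal{M}_k$ the partition of $X$ with only one block, and for each $2\leq k<k_{\mathfrak{C}}$, $\mathfrak{C}$ assigns to each $X\in\mathcal{M}_k$ the partition of $X$ into $k$ singletons.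
   Context: $\mathcal{M}^{inj}$ is the category whose objects are finite metric spaces and whose morphisms $f:(X,d_X)\to(Y,d_Y)$ are injective distance non-increasing maps. For a set map $f:X\to Y$ and a partition $P_Y$ of $Y$, $f^*(P_Y)$ is the partition of $X$ with blocks the nonempty sets $f^{-1}(B)$, $B\in P_Y$. A clustering functor on $\mathcal{M}^{inj}$ is a rule $\mathfrak{C}$ assigning to every finite metric space $(X,d_X)$ a partition $\mathfrak{C}(X,d_X)$ of $X$ such that for every morphism $f:X\to Y$, $\mathfrak{C}(X)$ refines $f^*(\mathfrak{C}(Y))$. For $k\geq2$ and $\delta>0$, $\Delta_k(\delta)$ is the metric space with $k$ points all of whose pairwise distances equal $\delta$. $\mathcal{M}_k$ denotes the collection of finite metric spaces with exactly $k$ points. *)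

theory Defs
  imports Complex_Main "HOL-Library.Disjoint_Sets"
begin

text \<open>Finite metric spaces are represented with carrier a finite subset of nat
  and a distance function on nat (only its values on the carrier matter).\<close>

definition fin_metric :: "nat set \<Rightarrow> (nat \<Rightarrow> nat \<Rightarrow> real) \<Rightarrow> bool" where
  "fin_metric X d \<longleftrightarrow> finite X \<and>
     (\<forall>x\<in>X. \<forall>y\<in>X. d x y \<ge> 0 \<and> (d x y = 0 \<longleftrightarrow> x = y) \<and> d x y = d y x) \<and>
     (\<forall>x\<in>X. \<forall>y\<in>X. \<forall>z\<in>X. d x z \<le> d x y + d y z)"

definition inj_morph :: "nat set \<Rightarrow> (nat \<Rightarrow> nat \<Rightarrow> real) \<Rightarrow> nat set \<Rightarrow> (nat \<Rightarrow> nat \<Rightarrow> real)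
    \<Rightarrow> (nat \<Rightarrow> nat) \<Rightarrow> bool" where
  "inj_morph X dX Y dY f \<longleftrightarrow> f ` X \<subseteq> Y \<and> inj_on f X \<and>
     (\<forall>x\<in>X. \<forall>y\<in>X. dY (f x) (f y) \<le> dX x y)"

definition pullback :: "(nat \<Rightarrow> nat) \<Rightarrow> nat set \<Rightarrow> nat set set \<Rightarrow> nat set set" where
  "pullback f X PY = {f -` B \<inter> X | B. B \<in> PY \<and> f -` B \<inter> X \<noteq> {}}"

definition refines :: "'a set set \<Rightarrow> 'a set set \<Rightarrow> bool" where
  "refines P Q \<longleftrightarrow> (\<forall>B\<in>P. \<exists>B'\<in>Q. B \<subseteq> B')"

definition clustering_functor ::
    "(nat set \<Rightarrow> (nat \<Rightarrow> nat \<Rightarrow> real) \<Rightarrow> nat set set) \<Rightarrow> bool" where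
  "clustering_functor C \<longleftrightarrow>
     (\<forall>X d. fin_metric X d \<longrightarrow> partition_on X (C X d)) \<and>
     (\<forall>X dX Y dY f. fin_metric X dX \<and> fin_metric Y dY \<and> inj_morph X dX Y dY f \<longrightarrow>
        refines (C X dX) (pullback f X (C Y dY)))"

definition scale_invariant ::
    "(nat set \<Rightarrow> (nat \<Rightarrow> nat \<Rightarrow> real) \<Rightarrow> nat set set) \<Rightarrow> bool" where
  "scale_invariant C \<longleftrightarrow>
     (\<forall>X d (l::real). fin_metric X d \<and> l > 0 \<longrightarrow> C X (\<lambda>x y. l * d x y) = C X d)"

definition Delta_carrier :: "nat \<Rightarrow> nat set" where
  "Delta_carrier k = {0..<k}"

definition Delta_dist :: "real \<Rightarrow> nat \<Rightarrow> nat \<Rightarrow> real" where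
  "Delta_dist \<delta> x y = (if x = y then 0 else \<delta>)"

definition Kset :: "(nat set \<Rightarrow> (nat \<Rightarrow> nat \<Rightarrow> real) \<Rightarrow> nat set set) \<Rightarrow> nat set" where
  "Kset C = {k. k \<ge> 2 \<and> card (C (Delta_carrier k) (Delta_dist 1)) = 1}"

end

theory Submission
  imports Defs
begin

lemma part_single_block:
  assumes "partition_on A P" "A \<in> P" shows "P = {A}"
proof -
  have "B = A" if "B \<in> P" for B
  proof -
    have "B \<noteq> {}" "B \<subseteq> A" using assms(1) that by (auto simp: partition_on_def)
    then have "B \<inter> A \<noteq> {}" by blast
    then show ?thesis using assms that unfolding partition_on_def disjoint_def by blast
  qed
  then show ?thesis using assms(2) by blast
qed

lemma part_singletons:
  assumes "partition_on A P" "\<forall>B\<in>P. \<forall>a\<in>B. \<forall>b\<in>B. a = b"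
  shows "P = (\<lambda>x. {x}) ` A"
proof
  show "P \<subseteq> (\<lambda>x. {x}) ` A"
  proof
    fix B assume B: "B \<in> P"
    then have "B \<noteq> {}" "B \<subseteq> A" using assms(1) by (auto simp: partition_on_def)
    then obtain a where "a \<in> B" by blast
    then have "B = {a}" using assms(2) B by blast
    then show "B \<in> (\<lambda>x. {x}) ` A" using \<open>B \<subseteq> A\<close> by auto
  qed
  show "(\<lambda>x. {x}) ` A \<subseteq> P"
  proof
    fix S assume "S \<in> (\<lambda>x. {x}) ` A"
    then obtain x where x: "x \<in> A" "S = {x}" by auto
    then obtain B where B: "B \<in> P" "x \<in> B" using assms(1) by (auto simp: partition_on_def)
    then have "B = {x}" using assms(2) by blast
    then show "S \<in> P" using B x by simp
  qed
qed

lemma fm_Delta: "\<delta> > 0 \<Longrightarrow> fin_metric (Delta_carrier k) (Delta_dist \<delta>)"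
  by (auto simp: fin_metric_def Delta_carrier_def Delta_dist_def)

lemma scale_Delta:
  assumes "scale_invariant C" "\<delta> > 0"
  shows "C (Delta_carrier k) (Delta_dist \<delta>) = C (Delta_carrier k) (Delta_dist 1)"
proof -
  have "Delta_dist \<delta> = (\<lambda>x y. \<delta> * Delta_dist 1 x y)" by (auto simp: Delta_dist_def fun_eq_iff)
  then show ?thesis using assms fm_Delta[of 1 k] unfolding scale_invariant_def by simp
qed

lemma dichotomy:
  assumes CF: "clustering_functor C"
  shows "C (Delta_carrier k) (Delta_dist 1) = {Delta_carrier k} \<or>
         C (Delta_carrier k) (Delta_dist 1) = (\<lambda>x. {x}) ` Delta_carrier k"
proof -
  let ?D = "Delta_carrier k" let ?P = "C ?D (Delta_dist 1)"
  have fm: "fin_metric ?D (Delta_dist 1)" by (rule fm_Delta) simp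
  have part: "partition_on ?D ?P" using CF fm unfolding clustering_functor_def by blast
  show ?thesis
  proof (cases "\<exists>B\<in>?P. \<exists>a\<in>B. \<exists>b\<in>B. a \<noteq> b")
    case False
    then have "?P = (\<lambda>x. {x}) ` ?D" using part_singletons[OF part] by blast
    then show ?thesis by blast
  next
    case True
    then obtain B a b where B: "B \<in> ?P" "a \<in> B" "b \<in> B" "a \<noteq> b" by blast
    have BD: "B \<subseteq> ?D" using part B(1) by (auto simp: partition_on_def)
    have "c \<in> B" if c: "c \<in> ?D" for c
    proof (rule ccontr)
      assume cB: "c \<notin> B"
      define \<sigma> where "\<sigma> = (\<lambda>x::nat. if x = b then c else if x = c then b else x)"
      have injs: "inj_on \<sigma> ?D" unfolding \<sigma>_def inj_on_def by auto
      have img: "\<sigma> ` ?D \<subseteq> ?D" using c BD B(3) unfolding \<sigma>_def by auto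
      have "\<sigma> x = \<sigma> y \<longleftrightarrow> x = y" for x y unfolding \<sigma>_def by auto
      then have mor: "inj_morph ?D (Delta_dist 1) ?D (Delta_dist 1) \<sigma>"
        using injs img by (auto simp: inj_morph_def Delta_dist_def)
      have "refines ?P (pullback \<sigma> ?D ?P)" using CF fm mor unfolding clustering_functor_def by blast
      then obtain B' where B': "B' \<in> pullback \<sigma> ?D ?P" "B \<subseteq> B'" using B(1)
        unfolding refines_def by blast
      then obtain B'' where B'': "B'' \<in> ?P" "B' = \<sigma> -` B'' \<inter> ?D" unfolding pullback_def by blast
      have "a \<noteq> c" using cB B(2) by auto
      then have "\<sigma> a = a" using B(4) unfolding \<sigma>_def by auto
      then have "a \<in> B''" using B' B'' B(2) by auto
      then have "B'' = B" using part B(1) B'' B(2) unfolding partition_on_def disjoint_def by blast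
      moreover have "\<sigma> b = c" unfolding \<sigma>_def by simp
      ultimately have "c \<in> B" using B' B'' B(3) by auto
      then show False using cB by simp
    qed
    then have "B = ?D" using BD by blast
    then show ?thesis using part_single_block[OF part] B(1) by simp
  qed
qed

lemma transfer:
  assumes CF: "clustering_functor C" and SI: "scale_invariant C"
    and fm: "fin_metric X d" and cX: "card X = k" and k2: "k \<ge> 2"
  shows "C (Delta_carrier k) (Delta_dist 1) = {Delta_carrier k} \<Longrightarrow> C X d = {X}"
    and "C (Delta_carrier k) (Delta_dist 1) = (\<lambda>x. {x}) ` Delta_carrier k \<Longrightarrow> C X d = (\<lambda>x. {x}) ` X"
proof -
  let ?D = "Delta_carrier k"
  have finX: "finite X" using fm by (simp add: fin_metric_def)
  have "card ?D = card X" by (simp add: Delta_carrier_def cX)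
  then obtain f where f: "bij_betw f ?D X"
    using finite_same_card_bij[of ?D X] finX by (auto simp: Delta_carrier_def)
  have partX: "partition_on X (C X d)" using CF fm unfolding clustering_functor_def by blast
  obtain x0 y0 where xy: "x0 \<in> X" "y0 \<in> X" "x0 \<noteq> y0"
  proof -
    have "1 < card X" using cX k2 by simp
    then show ?thesis using that card_le_Suc0_iff_eq[OF finX] by (metis One_nat_def not_less)
  qed
  have dpos: "d x y > 0" if "x \<in> X" "y \<in> X" "x \<noteq> y" for x y
    using fm that unfolding fin_metric_def by (metis less_eq_real_def)
  {
    assume triv: "C ?D (Delta_dist 1) = {?D}"
    define M where "M = Max ((\<lambda>(x,y). d x y) ` (X \<times> X))"
    have fin: "finite ((\<lambda>(x,y). d x y) ` (X \<times> X))" using finX by simp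
    have leM: "d x y \<le> M" if "x \<in> X" "y \<in> X" for x y
      unfolding M_def by (rule Max_ge[OF fin]) (use that in force)
    have Mpos: "M > 0" using leM[OF xy(1,2)] dpos[OF xy] by simp
    have d0: "d x x = 0" if "x \<in> X" for x using fm that unfolding fin_metric_def by blast
    have fX: "f x \<in> X" if "x \<in> ?D" for x using f that unfolding bij_betw_def by blast
    have mor: "inj_morph ?D (Delta_dist M) X d f"
      using f unfolding inj_morph_def bij_betw_def Delta_dist_def
      by (auto simp: d0 fX leM)
    have "refines (C ?D (Delta_dist M)) (pullback f ?D (C X d))"
      using CF fm fm_Delta[OF Mpos] mor unfolding clustering_functor_def by blast
    then have "refines {?D} (pullback f ?D (C X d))" using scale_Delta[OF SI Mpos] triv by simp
    then obtain B where B: "B \<in> C X d" "?D \<subseteq> f -` B" unfolding refines_def pullback_def by auto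
    then have "X \<subseteq> B" using f unfolding bij_betw_def by auto
    moreover have "B \<subseteq> X" using partX B(1) by (auto simp: partition_on_def)
    ultimately have "X \<in> C X d" using B(1) by auto
    then show "C X d = {X}" using part_single_block[OF partX] by simp
  }
  {
    assume disc: "C ?D (Delta_dist 1) = (\<lambda>x. {x}) ` ?D"
    define S where "S = (\<lambda>(x,y). d x y) ` {p \<in> X \<times> X. fst p \<noteq> snd p}"
    define m where "m = Min S"
    have fin: "finite S" using finX unfolding S_def by simp
    have ne: "(x0,y0) \<in> {p \<in> X \<times> X. fst p \<noteq> snd p}" using xy by simp
    then have Sne: "S \<noteq> {}" unfolding S_def by blast
    have mle: "m \<le> d x y" if "x \<in> X" "y \<in> X" "x \<noteq> y" for x y
      unfolding m_def by (rule Min_le[OF fin]) (use that in \<open>force simp: S_def\<close>)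
    have "m \<in> S" unfolding m_def using Min_in[OF fin Sne] .
    then have mpos: "m > 0" unfolding S_def using dpos by auto
    define g where "g = inv_into ?D f"
    have g: "bij_betw g X ?D" unfolding g_def by (rule bij_betw_inv_into[OF f])
    have mor: "inj_morph X d ?D (Delta_dist m) g"
      using g mle fm unfolding inj_morph_def bij_betw_def fin_metric_def Delta_dist_def
      by (auto simp: image_subset_iff)
    have "refines (C X d) (pullback g X (C ?D (Delta_dist m)))"
      using CF fm fm_Delta[OF mpos] mor unfolding clustering_functor_def by blast
    then have ref: "refines (C X d) (pullback g X ((\<lambda>x. {x}) ` ?D))"
      using scale_Delta[OF SI mpos] disc by simp
    have "\<forall>B\<in>C X d. \<forall>a\<in>B. \<forall>b\<in>B. a = b"
    proof (intro ballI)
      fix B a b assume B: "B \<in> C X d" and ab: "a \<in> B" "b \<in> B"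
      obtain B' where "B' \<in> pullback g X ((\<lambda>x. {x}) ` ?D)" "B \<subseteq> B'" using ref B unfolding refines_def by blast
      then obtain j where "B \<subseteq> g -` {j} \<inter> X" unfolding pullback_def by blast
      then have "g a = g b" "a \<in> X" "b \<in> X" using ab by auto
      then show "a = b" using g unfolding bij_betw_def inj_on_def by blast
    qed
    then show "C X d = (\<lambda>x. {x}) ` X" using part_singletons[OF partX] by simp
  }
qed

lemma card_sing: "card ((\<lambda>x. {x}) ` Delta_carrier k) = k"
  by (subst card_image) (auto simp: inj_on_def Delta_carrier_def)

lemma K_iff:
  assumes CF: "clustering_functor C" and k2: "k \<ge> 2"
  shows "k \<in> Kset C \<longleftrightarrow> C (Delta_carrier k) (Delta_dist 1) = {Delta_carrier k}"
    and "k \<notin> Kset C \<longleftrightarrow> C (Delta_carrier k) (Delta_dist 1) = (\<lambda>x. {x}) ` Delta_carrier k"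
proof -
  have "(\<lambda>x. {x}) ` Delta_carrier k \<noteq> {Delta_carrier k}"
    using card_sing[of k] k2 by (metis card.empty card.insert empty_iff finite.emptyI
        numeral_le_one_iff semiring_norm(69) One_nat_def)
  then show "k \<in> Kset C \<longleftrightarrow> C (Delta_carrier k) (Delta_dist 1) = {Delta_carrier k}"
    and "k \<notin> Kset C \<longleftrightarrow> C (Delta_carrier k) (Delta_dist 1) = (\<lambda>x. {x}) ` Delta_carrier k"
    using dichotomy[OF CF, of k] k2 card_sing[of k] unfolding Kset_def by auto
qed

lemma K_up:
  assumes CF: "clustering_functor C" and k: "k \<in> Kset C"
  shows "Suc k \<in> Kset C"
proof -
  have k2: "k \<ge> 2" using k by (simp add: Kset_def)
  have triv: "C (Delta_carrier k) (Delta_dist 1) = {Delta_carrier k}" using K_iff(1)[OF CF k2] k by simp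
  have "C (Delta_carrier (Suc k)) (Delta_dist 1) \<noteq> (\<lambda>x. {x}) ` Delta_carrier (Suc k)"
  proof
    assume disc: "C (Delta_carrier (Suc k)) (Delta_dist 1) = (\<lambda>x. {x}) ` Delta_carrier (Suc k)"
    have mor: "inj_morph (Delta_carrier k) (Delta_dist 1) (Delta_carrier (Suc k)) (Delta_dist 1) id"
      by (auto simp: inj_morph_def Delta_carrier_def)
    have "refines (C (Delta_carrier k) (Delta_dist 1))
        (pullback id (Delta_carrier k) (C (Delta_carrier (Suc k)) (Delta_dist 1)))"
      using CF fm_Delta[of 1] mor unfolding clustering_functor_def by simp
    then obtain j where "Delta_carrier k \<subseteq> {j}"
      using triv disc unfolding refines_def pullback_def by auto
    moreover have "0 \<in> Delta_carrier k" "1 \<in> Delta_carrier k" using k2 by (auto simp: Delta_carrier_def)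
    ultimately show False by auto
  qed
  then show ?thesis using K_iff(2)[OF CF, of "Suc k"] k2 by auto
qed

theorem mainTheorem7:
  fixes C :: "nat set \<Rightarrow> (nat \<Rightarrow> nat \<Rightarrow> real) \<Rightarrow> nat set set"
  assumes "clustering_functor C" and "scale_invariant C"
  shows "(Kset C = {} \<longrightarrow>
            (\<forall>X d. fin_metric X d \<longrightarrow> C X d = (\<lambda>x. {x}) ` X)) \<and>
         (Kset C \<noteq> {} \<longrightarrow>
            (\<forall>k X d. k \<ge> (LEAST k. k \<in> Kset C) \<and> fin_metric X d \<and> card X = k
                 \<longrightarrow> C X d = {X}) \<and>
            (\<forall>k X d. 2 \<le> k \<and> k < (LEAST k. k \<in> Kset C) \<and> fin_metric X d \<and> card X = k
                 \<longrightarrow> C X d = (\<lambda>x. {x}) ` X))"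
proof -
  note CF = assms(1) and SI = assms(2)
  have disc_case: "C X d = (\<lambda>x. {x}) ` X" if fm: "fin_metric X d" and nk: "card X \<notin> Kset C" for X d
  proof (cases "card X \<ge> 2")
    case True
    then show ?thesis using transfer(2)[OF CF SI fm refl True] K_iff(2)[OF CF True] nk by simp
  next
    case False
    have finX: "finite X" using fm by (simp add: fin_metric_def)
    have part: "partition_on X (C X d)" using CF fm unfolding clustering_functor_def by blast
    have "\<forall>a\<in>X. \<forall>b\<in>X. a = b" using False card_le_Suc0_iff_eq[OF finX] by simp
    then have "\<forall>B\<in>C X d. \<forall>a\<in>B. \<forall>b\<in>B. a = b" using part by (auto simp: partition_on_def)
    then show ?thesis using part_singletons[OF part] by simp
  qed
  show ?thesis
  proof (intro conjI impI allI)
    fix X d assume "Kset C = {}" "fin_metric X d"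
    then show "C X d = (\<lambda>x. {x}) ` X" using disc_case by blast
  next
    fix k X d assume ne: "Kset C \<noteq> {}" and
      h: "(LEAST k. k \<in> Kset C) \<le> k \<and> fin_metric X d \<and> card X = k"
    have L: "(LEAST k. k \<in> Kset C) \<in> Kset C" using ne by (metis LeastI ex_in_conv)
    have all: "(LEAST k. k \<in> Kset C) + n \<in> Kset C" for n
      by (induction n) (use L K_up[OF CF] in auto)
    have "k = (LEAST k. k \<in> Kset C) + (k - (LEAST k. k \<in> Kset C))" using h by simp
    then have "k \<in> Kset C" using all by metis
    then have k2: "k \<ge> 2" by (simp add: Kset_def)
    show "C X d = {X}" using transfer(1)[OF CF SI _ _ k2] K_iff(1)[OF CF k2] \<open>k \<in> Kset C\<close> h by blast
  next
    fix k X d assume ne: "Kset C \<noteq> {}" and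
      h: "2 \<le> k \<and> k < (LEAST k. k \<in> Kset C) \<and> fin_metric X d \<and> card X = k"
    then have "k \<notin> Kset C" using not_less_Least by blast
    then show "C X d = (\<lambda>x. {x}) ` X" using disc_case h by blast
  qed
qed

end
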